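(* Let $a,b,c,d\geq 1$ be integers and $$M=\begin{pmatrix} a & b\\ c & d\end{pmatrix}.$$ Then $\mathrm{Cat}(M)\neq\emptyset$ in each of the following cases: (1) $a=b=c=d=1$; (2) $a=1$ and $d>bc$; (3) $d=1$ and $a>bc$; (4) $a>1$ and $d>1$. In all other cases $\mathrm{Cat}(M)=\emptyset$.
   Context: For an $n\times n$ matrix $M=(m_{ij})$ with entries in the natural numbers, $\mathrm{Cat}(M)$ denotes the collection of categories $A$ with exactly $n$ distinct objects $x_1,\dots,x_n$ such that $|A(x_i,x_j)|=m_{ij}$ for all $i,j$, where $A(x_i,x_j)$ is the set of morphisms from $x_i$ to $x_j$. *)

theory Defs
  imports Main
begin

text \<open>Hom i j is the set of morphisms from object i to object j,
  cmp i j k g f is the composite (g after f) of f : i -> j and g : j -> k,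
  ident i is the identity morphism of object i.\<close>

definition is_category ::
  "nat \<Rightarrow> (nat \<Rightarrow> nat \<Rightarrow> 'm set) \<Rightarrow> (nat \<Rightarrow> nat \<Rightarrow> nat \<Rightarrow> 'm \<Rightarrow> 'm \<Rightarrow> 'm) \<Rightarrow> (nat \<Rightarrow> 'm) \<Rightarrow> bool"
where
  "is_category n Hom cmp ident \<longleftrightarrow>
     (\<forall>i<n. ident i \<in> Hom i i) \<and>
     (\<forall>i<n. \<forall>j<n. \<forall>k<n. \<forall>f\<in>Hom i j. \<forall>g\<in>Hom j k. cmp i j k g f \<in> Hom i k) \<and>
     (\<forall>i<n. \<forall>j<n. \<forall>f\<in>Hom i j. cmp i j j (ident j) f = f \<and> cmp i i j f (ident i) = f) \<and>
     (\<forall>i<n. \<forall>j<n. \<forall>k<n. \<forall>l<n. \<forall>f\<in>Hom i j. \<forall>g\<in>Hom j k. \<forall>h\<in>Hom k l.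
        cmp i k l h (cmp i j k g f) = cmp i j l (cmp j k l h g) f)"

definition in_Cat ::
  "nat \<Rightarrow> (nat \<Rightarrow> nat \<Rightarrow> nat) \<Rightarrow> (nat \<Rightarrow> nat \<Rightarrow> 'm set) \<Rightarrow> (nat \<Rightarrow> nat \<Rightarrow> nat \<Rightarrow> 'm \<Rightarrow> 'm \<Rightarrow> 'm) \<Rightarrow> (nat \<Rightarrow> 'm) \<Rightarrow> bool"
where
  "in_Cat n M Hom cmp ident \<longleftrightarrow> is_category n Hom cmp ident \<and>
     (\<forall>i<n. \<forall>j<n. finite (Hom i j) \<and> card (Hom i j) = M i j)"

definition mat2 :: "nat \<Rightarrow> nat \<Rightarrow> nat \<Rightarrow> nat \<Rightarrow> nat \<Rightarrow> nat \<Rightarrow> nat" where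
  "mat2 a b c d = (\<lambda>i j. if i = 0 then (if j = 0 then a else b) else (if j = 0 then c else d))"

end

theory Submission
  imports Defs
begin

lemma key:
  assumes cat: "is_category n H cmp ident" and xy: "x<n" "y<n" "x\<noteq>y"
    and fin: "finite (H y y)" "finite (H x y)" "finite (H y x)" and cx: "card (H x x) = 1"
  shows "card (H y y) > card (H x y) * card (H y x) \<or>
         (card (H y y) = 1 \<and> card (H x y) = 1 \<and> card (H y x) = 1)"
proof -
  have idm: "\<And>i. i<n \<Longrightarrow> ident i \<in> H i i" using cat unfolding is_category_def by simp
  have cl: "\<And>i j k f g. i<n \<Longrightarrow> j<n \<Longrightarrow> k<n \<Longrightarrow> f\<in>H i j \<Longrightarrow> g\<in>H j k \<Longrightarrow> cmp i j k g f \<in> H i k"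
    using cat unfolding is_category_def by simp
  have idl: "\<And>i j f. i<n \<Longrightarrow> j<n \<Longrightarrow> f\<in>H i j \<Longrightarrow> cmp i j j (ident j) f = f"
    using cat unfolding is_category_def by simp
  have idr: "\<And>i j f. i<n \<Longrightarrow> j<n \<Longrightarrow> f\<in>H i j \<Longrightarrow> cmp i i j f (ident i) = f"
    using cat unfolding is_category_def by simp
  have as: "\<And>i j k l f g h. i<n \<Longrightarrow> j<n \<Longrightarrow> k<n \<Longrightarrow> l<n \<Longrightarrow> f\<in>H i j \<Longrightarrow> g\<in>H j k \<Longrightarrow> h\<in>H k l \<Longrightarrow>
        cmp i k l h (cmp i j k g f) = cmp i j l (cmp j k l h g) f"
    using cat unfolding is_category_def by simp
  have Hxx: "H x x = {ident x}"
    using cx idm[OF xy(1)] by (metis card_1_singletonE singletonD)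
  have gf: "\<And>f g. f \<in> H x y \<Longrightarrow> g \<in> H y x \<Longrightarrow> cmp x y x g f = ident x"
    using cl xy Hxx by (metis singletonD)
  show ?thesis
  proof (cases "\<exists>f\<in>H x y. \<exists>g\<in>H y x. cmp y x y f g = ident y")
    case True
    then obtain f g where f: "f\<in>H x y" and g: "g \<in> H y x" and e: "cmp y x y f g = ident y" by blast
    have "H x y = {f}"
    proof (intro equalityI subsetI)
      fix f' assume f': "f' \<in> H x y"
      have "f' = cmp x y y (ident y) f'" using idl f' xy by simp
      also have "\<dots> = cmp x y y (cmp y x y f g) f'" using e by simp
      also have "\<dots> = cmp x x y f (cmp x y x g f')" using as[of x y x y f' g f] xy f g f' by simp
      also have "\<dots> = f" using gf[OF f' g] idr xy f by simp
      finally show "f' \<in> {f}" by simp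
    qed (use f in simp)
    moreover have "H y x = {g}"
    proof (intro equalityI subsetI)
      fix g' assume g': "g' \<in> H y x"
      have "g' = cmp y y x g' (ident y)" using idr g' xy by simp
      also have "\<dots> = cmp y y x g' (cmp y x y f g)" using e by simp
      also have "\<dots> = cmp y x x (cmp x y x g' f) g" using as[of y x y x g f g'] xy f g g' by simp
      also have "\<dots> = g" using gf[OF f g'] idl xy g by simp
      finally show "g' \<in> {g}" by simp
    qed (use g in simp)
    moreover have "H y y = {ident y}"
    proof (intro equalityI subsetI)
      fix h assume h: "h \<in> H y y"
      have "h = cmp y y y h (ident y)" using idr h xy by simp
      also have "\<dots> = cmp y y y h (cmp y x y f g)" using e by simp
      also have "\<dots> = cmp y x y (cmp x y y h f) g" using as[of y x y y g f h] xy f g h by simp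
      also have "\<dots> = cmp y x y f g"
      proof -
        have hf: "cmp x y y h f \<in> H x y" using cl[of x y y f h] xy f h by simp
        have "cmp x y y h f = f" using \<open>H x y = {f}\<close> hf by simp
        thus ?thesis by simp
      qed
      finally show "h \<in> {ident y}" using e by simp
    qed (use idm xy in simp)
    ultimately show ?thesis by simp
  next
    case False
    let ?F = "\<lambda>(g,f). cmp y x y f g"
    have inj: "inj_on ?F (H y x \<times> H x y)"
    proof (rule inj_onI, clarsimp)
      fix g f g' f' assume g: "g \<in> H y x" and f: "f \<in> H x y" and g': "g' \<in> H y x" and f': "f' \<in> H x y"
        and e: "cmp y x y f g = cmp y x y f' g'"
      have "g = cmp y x x (ident x) g" using idl g xy by simp
      also have "\<dots> = cmp y x x (cmp x y x g f) g" using gf[OF f g] by simp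
      also have "\<dots> = cmp y y x g (cmp y x y f g)" using as[of y x y x g f g] xy f g by simp
      also have "\<dots> = cmp y y x g (cmp y x y f' g')" using e by simp
      also have "\<dots> = cmp y x x (cmp x y x g f') g'" using as[of y x y x g' f' g] xy f' g' g by simp
      also have "\<dots> = g'" using gf[OF f' g] idl xy g' by simp
      finally have 1: "g = g'" .
      have "f = cmp x x y f (ident x)" using idr f xy by simp
      also have "\<dots> = cmp x x y f (cmp x y x g f)" using gf[OF f g] by simp
      also have "\<dots> = cmp x y y (cmp y x y f g) f" using as[of x y x y f g f] xy f g by simp
      also have "\<dots> = cmp x y y (cmp y x y f' g') f" using e by simp
      also have "\<dots> = cmp x x y f' (cmp x y x g' f)" using as[of x y x y f g' f'] xy f' g' f by simp
      also have "\<dots> = f'" using gf[OF f g'] idr xy f' by simp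
      finally show "g = g' \<and> f = f'" using 1 by simp
    qed
    have sub: "?F ` (H y x \<times> H x y) \<subseteq> H y y - {ident y}"
    proof (rule image_subsetI, clarsimp)
      fix g f assume "g \<in> H y x" "f \<in> H x y"
      thus "cmp y x y f g \<in> H y y \<and> cmp y x y f g \<noteq> ident y" using False cl[of y x y g f] xy by auto
    qed
    have "card (H y x \<times> H x y) \<le> card (H y y - {ident y})"
      using card_inj_on_le[OF inj sub] fin by simp
    moreover have "card (H y y - {ident y}) = card (H y y) - 1"
      using idm xy fin by simp
    moreover have "card (H y y) \<ge> 1" using idm xy fin
      by (metis One_nat_def Suc_leI card_gt_0_iff empty_iff)
    ultimately show ?thesis by (simp add: card_cartesian_product mult.commute, linarith)
  qed
qed
lemma all2: "(\<forall>i<(2::nat). P i) = (P 0 \<and> P 1)"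
  by (auto simp: less_Suc_eq numeral_2_eq_2)

lemma in_Cat_cong: "(\<And>i j. i<n \<Longrightarrow> j<n \<Longrightarrow> M i j = M' i j) \<Longrightarrow> in_Cat n M H cmp idt = in_Cat n M' H cmp idt"
  unfolding in_Cat_def by auto

lemma case1: "in_Cat 2 (mat2 1 1 1 1) (\<lambda>i j. {0::nat}) (\<lambda>i j k g f. 0) (\<lambda>i. 0)"
  unfolding in_Cat_def is_category_def all2 mat2_def by simp

definition cmp0 :: "nat \<Rightarrow> nat \<Rightarrow> nat \<Rightarrow> nat \<Rightarrow> nat \<Rightarrow> nat" where
  "cmp0 i j k g f = (if i = j \<and> f = 0 then g else if j = k \<and> g = 0 then f else if i = k then 1 else 0)"

definition pi2 :: "nat \<Rightarrow> nat \<Rightarrow> nat \<Rightarrow> nat" where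
  "pi2 b c n = (if n - 1 < b*c then n - 1 else 0)"
definition fu :: "nat \<Rightarrow> nat \<Rightarrow> nat \<Rightarrow> nat" where "fu b c n = pi2 b c n div c"
definition gu :: "nat \<Rightarrow> nat \<Rightarrow> nat \<Rightarrow> nat" where "gu b c n = pi2 b c n mod c"
definition pr :: "nat \<Rightarrow> nat \<Rightarrow> nat \<Rightarrow> nat" where "pr c f g = f*c + g + 1"

definition cmp2 :: "nat \<Rightarrow> nat \<Rightarrow> nat \<Rightarrow> nat \<Rightarrow> nat \<Rightarrow> nat \<Rightarrow> nat \<Rightarrow> nat" where
  "cmp2 b c i j k g f =
    (if j = 0 then (if i = 0 then g else if k = 0 then f else pr c g f)
     else if i = 0 \<and> k = 0 then 0
     else if i = 0 then (if g = 0 then f else fu b c g)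
     else if k = 0 then (if f = 0 then g else gu b c f)
     else if g = 0 then f else if f = 0 then g else pr c (fu b c g) (gu b c f))"

lemma fu_lt': "b \<ge> 1 \<Longrightarrow> c \<ge> 1 \<Longrightarrow> fu b c n < b"
  unfolding fu_def pi2_def by (simp add: less_mult_imp_div_less)
lemma gu_lt': "c \<ge> 1 \<Longrightarrow> gu b c n < c"
  unfolding gu_def by simp
lemma pr_ne0': "pr c f g \<noteq> 0" unfolding pr_def by simp
lemma pr_lt': assumes "f < b" "g < c" shows "pr c f g \<le> b*c"
proof -
  have "Suc f \<le> b" using assms by simp
  hence "Suc f * c \<le> b * c" by (rule mult_le_mono1)
  thus ?thesis using assms unfolding pr_def by simp
qed
lemma pi_pr: assumes "f < b" "g < c" shows "pi2 b c (pr c f g) = f*c+g"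
  using pr_lt'[OF assms] unfolding pi2_def pr_def by simp
lemma fu_pr': assumes "f < b" "g < c" shows "fu b c (pr c f g) = f"
  unfolding fu_def pi_pr[OF assms] using assms by simp
lemma gu_pr': assumes "f < b" "g < c" shows "gu b c (pr c f g) = g"
  unfolding gu_def pi_pr[OF assms] using assms by simp

lemma pr_pos: "0 < pr c f g" unfolding pr_def by simp
lemma as2:
  assumes bc: "b \<ge> 1" "c \<ge> 1" and ijkl: "i<2" "j<2" "k<2" "l<2"
    and m: "f < mat2 1 b c d i j" "g < mat2 1 b c d j k" "h < mat2 1 b c d k l"
  shows "cmp2 b c i k l h (cmp2 b c i j k g f) = cmp2 b c i j l (cmp2 b c j k l h g) f"
proof -
  have fl: "\<And>n. fu b c n < b" and gl: "\<And>n. gu b c n < c" using fu_lt' gu_lt' bc by auto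
  have 2: "\<And>x::nat. x < 2 \<Longrightarrow> x = 0 \<or> x = 1" by auto
  from 2[OF ijkl(1)] 2[OF ijkl(2)] 2[OF ijkl(3)] 2[OF ijkl(4)] m show ?thesis
    apply (elim disjE)
    apply (simp_all add: mat2_def cmp2_def fu_pr' gu_pr' fl gl pr_pos pr_ne0')
    done
qed
lemma case2':
  assumes bc: "b \<ge> 1" "c \<ge> 1" "d > b*c"
  shows "in_Cat 2 (mat2 1 b c d) (\<lambda>i j. {0..<mat2 1 b c d i j}) (cmp2 b c) (\<lambda>i. 0)"
  unfolding in_Cat_def is_category_def
proof (intro conjI allI impI ballI)
  have fl: "\<And>n. fu b c n < b" and gl: "\<And>n. gu b c n < c" using fu_lt' gu_lt' bc by auto
  have 2: "\<And>x::nat. x < 2 \<Longrightarrow> x = 0 \<or> x = 1" by auto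
  have pl: "\<And>f g. f < b \<Longrightarrow> g < c \<Longrightarrow> pr c f g < d" using pr_lt' bc(3) by (meson le_less_trans)
  {
    fix i j k g f assume ijk: "i<2" "j<2" "k<2" and m: "f \<in> {0..<mat2 1 b c d i j}" "g \<in> {0..<mat2 1 b c d j k}"
    from 2[OF ijk(1)] 2[OF ijk(2)] 2[OF ijk(3)] m
    show "cmp2 b c i j k g f \<in> {0..<mat2 1 b c d i k}"
      apply (elim disjE)
      using bc by (simp_all add: mat2_def cmp2_def fl gl pl)
  }
  {
    fix i j k l f g h assume "i<2" "j<2" "k<2" "l<2" "f \<in> {0..<mat2 1 b c d i j}" "g \<in> {0..<mat2 1 b c d j k}"
      "h \<in> {0..<mat2 1 b c d k l}"
    thus "cmp2 b c i k l h (cmp2 b c i j k g f) = cmp2 b c i j l (cmp2 b c j k l h g) f"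
      using as2[OF bc(1,2)] by simp
  }
  {
    fix i j f assume ij: "i<2" "j<2" and m: "f \<in> {0..<mat2 1 b c d i j}"
    from 2[OF ij(1)] 2[OF ij(2)] m show "cmp2 b c i j j 0 f = f"
      by (elim disjE; simp add: mat2_def cmp2_def)
    from 2[OF ij(1)] 2[OF ij(2)] m show "cmp2 b c i i j f 0 = f"
      by (elim disjE; simp add: mat2_def cmp2_def)
  }
qed (use bc in \<open>auto simp: mat2_def\<close>)

lemma swap':
  assumes "in_Cat 2 M H cmp idt"
  shows "in_Cat 2 (\<lambda>i j. M (1-i) (1-j)) (\<lambda>i j. H (1-i) (1-j)) (\<lambda>i j k. cmp (1-i) (1-j) (1-k)) (\<lambda>i. idt (1-i))"
  using assms unfolding in_Cat_def is_category_def all2 by (simp only: diff_self_eq_0 diff_zero) (elim conjE, intro conjI TrueI refl, assumption+)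

lemma as0: "cmp0 i k l h (cmp0 i j k g f) = cmp0 i j l (cmp0 j k l h g) f"
  unfolding cmp0_def by auto
lemma case4':
  assumes "\<forall>i<n. \<forall>j<n. M i j \<ge> 1" "\<forall>i<n. M i i \<ge> 2"
  shows "in_Cat n M (\<lambda>i j. {0..<M i j}) cmp0 (\<lambda>i. 0)"
  unfolding in_Cat_def is_category_def
proof (intro conjI allI impI ballI)
  fix i j k g f assume "i<n" "j<n" "k<n" "f \<in> {0..<M i j}" "g \<in> {0..<M j k}"
  thus "cmp0 i j k g f \<in> {0..<M i k}" using assms unfolding cmp0_def
    by (auto simp: Suc_le_eq)
qed (use assms as0 in \<open>auto simp: cmp0_def Suc_le_eq\<close>)

lemma exist_part:
  fixes a b c d :: nat
  assumes "a \<ge> 1" "b \<ge> 1" "c \<ge> 1" "d \<ge> 1" and C: "(a = 1 \<and> b = 1 \<and> c = 1 \<and> d = 1) \<or> (a = 1 \<and> d > b * c) \<or> (d = 1 \<and> a > b * c)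
            \<or> (a > 1 \<and> d > 1)"
  shows "\<exists>(Hom :: nat \<Rightarrow> nat \<Rightarrow> nat set) cmp ident. in_Cat 2 (mat2 a b c d) Hom cmp ident"
proof -
  have 2: "\<And>x::nat. x < 2 \<Longrightarrow> x = 0 \<or> x = 1" by auto
  consider "a = 1 \<and> b = 1 \<and> c = 1 \<and> d = 1" | "a = 1 \<and> d > b * c" | "d = 1 \<and> a > b * c"
    | "a > 1 \<and> d > 1" using C by blast
  thus ?thesis
  proof cases
    case 1 thus ?thesis using case1 by blast
  next
    case 2 thus ?thesis using case2'[OF assms(2,3)] by blast
  next
    case 3
    hence "in_Cat 2 (mat2 1 c b a) (\<lambda>i j. {0..<mat2 1 c b a i j}) (cmp2 c b) (\<lambda>i. 0)"
      using case2'[OF assms(3,2)] by (simp add: mult.commute)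
    from swap'[OF this] have S: "in_Cat 2 (\<lambda>i j. mat2 1 c b a (1-i) (1-j)) (\<lambda>i j. {0..<mat2 1 c b a (1-i) (1-j)})
        (\<lambda>i j k. cmp2 c b (1-i) (1-j) (1-k)) (\<lambda>i. 0)" by simp
    have "in_Cat 2 (\<lambda>i j. mat2 1 c b a (1-i) (1-j)) (\<lambda>i j. {0..<mat2 1 c b a (1-i) (1-j)})
        (\<lambda>i j k. cmp2 c b (1-i) (1-j) (1-k)) (\<lambda>i. 0) =
        in_Cat 2 (mat2 a b c d) (\<lambda>i j. {0..<mat2 1 c b a (1-i) (1-j)})
        (\<lambda>i j k. cmp2 c b (1-i) (1-j) (1-k)) (\<lambda>i. 0)"
    proof (rule in_Cat_cong)
      fix i j :: nat assume "i<2" "j<2"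
      from 2[OF \<open>i<2\<close>] 2[OF \<open>j<2\<close>] 3 show "mat2 1 c b a (1-i) (1-j) = mat2 a b c d i j"
        unfolding mat2_def by (elim disjE) simp_all
    qed
    with S show ?thesis by blast
  next
    case 4
    have "in_Cat 2 (mat2 a b c d) (\<lambda>i j. {0..<mat2 a b c d i j}) cmp0 (\<lambda>i. 0)"
      by (rule case4') (use 4 assms in \<open>simp_all add: mat2_def all2\<close>)
    thus ?thesis by blast
  qed
qed

lemma nonexist_part:
  fixes a b c d :: nat
  assumes "a \<ge> 1" "b \<ge> 1" "c \<ge> 1" "d \<ge> 1" and N: "\<not> ((a = 1 \<and> b = 1 \<and> c = 1 \<and> d = 1) \<or> (a = 1 \<and> d > b * c) \<or> (d = 1 \<and> a > b * c)
            \<or> (a > 1 \<and> d > 1))"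
  shows "\<not> (\<exists>(Hom :: nat \<Rightarrow> nat \<Rightarrow> 'm set) cmp ident. in_Cat 2 (mat2 a b c d) Hom cmp ident)"
proof (intro notI, elim exE)
  fix H :: "nat \<Rightarrow> nat \<Rightarrow> 'm set" and cmp idt assume I: "in_Cat 2 (mat2 a b c d) H cmp idt"
  have cat: "is_category 2 H cmp idt" using I unfolding in_Cat_def by (rule conjunct1)
  have fc: "\<forall>i<2. \<forall>j<2. finite (H i j) \<and> card (H i j) = mat2 a b c d i j" using I unfolding in_Cat_def by (rule conjunct2)
  hence f: "finite (H 0 0)" "finite (H 0 1)" "finite (H 1 0)" "finite (H 1 1)"
    and cd: "card (H 0 0) = a" "card (H 0 1) = b" "card (H 1 0) = c" "card (H 1 1) = d"
    unfolding all2 mat2_def by simp_all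
  have "\<not> (a > 1 \<and> d > 1)" using N by blast
  hence ad: "a = 1 \<or> d = 1" using assms(1,4) by linarith
  have k1: "card (H 1 1) > card (H 0 1) * card (H 1 0) \<or> (card (H 1 1) = 1 \<and> card (H 0 1) = 1 \<and> card (H 1 0) = 1)"
    if "a = 1" using key[OF cat, of 0 1] f cd that by simp
  have k2: "card (H 0 0) > card (H 1 0) * card (H 0 1) \<or> (card (H 0 0) = 1 \<and> card (H 1 0) = 1 \<and> card (H 0 1) = 1)"
    if "d = 1" using key[OF cat, of 1 0] f cd that by simp
  show False
  proof (cases "a = 1")
    case True
    hence "d > b * c \<or> (d = 1 \<and> b = 1 \<and> c = 1)" using k1 cd by simp
    thus False using N True by blast
  next
    case False
    hence "d = 1" using ad by simp
    hence "a > c * b \<or> (a = 1 \<and> c = 1 \<and> b = 1)" using k2 cd by simp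
    hence "a > b * c \<or> (a = 1 \<and> c = 1 \<and> b = 1)" by (simp add: mult.commute)
    thus False using N \<open>d = 1\<close> by blast
  qed
qed

theorem mainTheorem2:
  fixes a b c d :: nat
  assumes "a \<ge> 1" "b \<ge> 1" "c \<ge> 1" "d \<ge> 1"
  shows "(((a = 1 \<and> b = 1 \<and> c = 1 \<and> d = 1) \<or> (a = 1 \<and> d > b * c) \<or> (d = 1 \<and> a > b * c)
            \<or> (a > 1 \<and> d > 1))
           \<longrightarrow> (\<exists>(Hom :: nat \<Rightarrow> nat \<Rightarrow> nat set) cmp ident. in_Cat 2 (mat2 a b c d) Hom cmp ident))
       \<and> (\<not> ((a = 1 \<and> b = 1 \<and> c = 1 \<and> d = 1) \<or> (a = 1 \<and> d > b * c) \<or> (d = 1 \<and> a > b * c)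
            \<or> (a > 1 \<and> d > 1))
           \<longrightarrow> \<not> (\<exists>(Hom :: nat \<Rightarrow> nat \<Rightarrow> 'm set) cmp ident. in_Cat 2 (mat2 a b c d) Hom cmp ident))"
  using exist_part[OF assms] nonexist_part[OF assms] by blast

end
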